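(* In the local-alternative setting—$(\xi_n)$ stationary Gaussian with mean $0$, variance $1$, $\gamma(k)\sim k^{-D}L(k)$, $D\in(0,1)$; $Y_n=G(\xi_n)$ with continuous strictly monotone distribution function $F$ and density $f$; $r$ the Hermite rank of $\{1_{\{G(\xi_1)\le x\}}-F(x)\}$, $Dr<1$; $0<\tau<1$, $c>0$, $h_n=cn^{-1}d_{n,r}$, $X_{n,i}=Y_i$ ($i\le\lfloor n\tau\rfloor$), $X_{n,i}=Y_i+h_n$ ($i>\lfloor n\tau\rfloor$); and under all hypotheses listed here: $\lambda\in(0,1/3)$, $\vartheta>0$ with $\sup_{t,x}d_{n,r}^{-1}(\min\{x,1-x\})^{-\lambda}|\sum_{j\le nt}(1_{\{F(Y_j)\le x\}}-x)-\frac{1}{r!}J_r(F^-(x))\sum_{j\le nt}H_r(\xi_j)|=\mathcal{O}_P(n^{-\vartheta})$; $0<\rho<\min\{1,(1-2\lambda-\vartheta)^{-1}\vartheta\}$ with $\sup_x(\min\{x,1-x\})^{-2\lambda}|u^{-1}(x-F(F^-(x)-u))-f(F^-(x))|=\mathcal{O}(u^\rho)$; $\sup_x(\min\{x,1-x\})^{-2\lambda}f(F^-(x))<\infty$; $n^{\lambda+\rho-1}=\mathcal{O}(d_{n,r}^{\rho-1})$; $2\lambda+\vartheta<1/2$; constants $C,\epsilon_1>0$ with $|1-f(F^-(x)+u)/f(F^-(x))|\le C(\min\{x,1-x\})^{-\epsilon_1}|u|$ for small $|u|$; $n^\lambda=o(d_{n,r}^{1-\lambda})$, $n^\lambda d_{n,r}^{1+\epsilon_1}=o(n)$,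 $d_{n,r}^{\rho+\lambda}=o(n^\rho)$—we have $$\sup_{x\in[0,1]}|\tilde F_n^-(x)-x|=\mathcal{O}_P(h_n)\quad\text{and}\quad\sup_{x\in[0,1]}(\min\{x,1-x\})^{-\lambda}|\tilde F_n^-(x)-x|=\mathcal{O}_P(n^\lambda h_n).$$
   Context: $H_q$ Hermite polynomials; $J_q(y)=\mathbb{E}[1_{\{G(\xi_1)\le y\}}H_q(\xi_1)]$; $r=\min_y\min\{q\ge1:J_q(y)\ne0\}$; $d_{n,r}^2=\operatorname{Var}(\sum_{i=1}^nH_r(\xi_i))$; $F^-$ generalized inverse. With $Y_{(n)}=\max_{i\le n}Y_i$, $H_n(x)=F(x)$ for $x<Y_{(n)}-h_n$, $H_n(x)=F(x-h_n)$ for $x>Y_{(n)}+h_n$, linear in between; $Y_{n,i}=H_n(X_{n,i})$, with order statistics $Y_{n,(1)}\le\dots\le Y_{n,(n)}$. $\tilde F_n^-:[0,1]\to[0,1]$ is defined by $\tilde F_n^-(0)=0$, $\tilde F_n^-(i/(n+1))=Y_{n,(i)}$ for $i=1,\dots,n$, $\tilde F_n^-(1)=1$, and linear interpolation in between. *)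

theory Defs
  imports "HOL-Probability.Probability" "HOL-Library.Landau_Symbols"
begin

fun hermite :: "nat \<Rightarrow> real \<Rightarrow> real" where
  "hermite 0 x = 1"
| "hermite (Suc 0) x = x"
| "hermite (Suc (Suc q)) x = x * hermite (Suc q) x - real (Suc q) * hermite q x"

definition normal_rv :: "'a measure \<Rightarrow> ('a \<Rightarrow> real) \<Rightarrow> bool" where
  "normal_rv M X \<longleftrightarrow> X \<in> borel_measurable M \<and>
     (\<exists>\<mu>. (AE \<omega> in M. X \<omega> = \<mu>) \<or>
          (\<exists>\<sigma>>0. distributed M lborel X (\<lambda>x. ennreal (normal_density \<mu> \<sigma> x))))"

definition gaussian_process :: "'a measure \<Rightarrow> (nat \<Rightarrow> 'a \<Rightarrow> real) \<Rightarrow> bool" where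
  "gaussian_process M \<xi> \<longleftrightarrow>
     (\<forall>I a. finite I \<and> I \<subseteq> {1..} \<longrightarrow> normal_rv M (\<lambda>\<omega>. \<Sum>i\<in>I. a i * \<xi> i \<omega>))"

definition stationary_process :: "'a measure \<Rightarrow> (nat \<Rightarrow> 'a \<Rightarrow> real) \<Rightarrow> bool" where
  "stationary_process M \<xi> \<longleftrightarrow>
     (\<forall>I k. finite I \<and> I \<subseteq> {1..} \<longrightarrow>
        distr M (PiM I (\<lambda>_. borel)) (\<lambda>\<omega>. restrict (\<lambda>i. \<xi> (i + k) \<omega>) I) =
        distr M (PiM I (\<lambda>_. borel)) (\<lambda>\<omega>. restrict (\<lambda>i. \<xi> i \<omega>) I))"

definition slowly_varying :: "(real \<Rightarrow> real) \<Rightarrow> bool" where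
  "slowly_varying L \<longleftrightarrow> L \<in> borel_measurable borel \<and> (\<forall>\<^sub>F x in at_top. L x > 0) \<and>
     (\<forall>a>0. ((\<lambda>x. L (a * x) / L x) \<longlongrightarrow> 1) at_top)"

definition Jcoef :: "'a measure \<Rightarrow> (real \<Rightarrow> real) \<Rightarrow> ('a \<Rightarrow> real) \<Rightarrow> nat \<Rightarrow> real \<Rightarrow> real" where
  "Jcoef M G \<xi>1 q y = (\<integral>\<omega>. (if G (\<xi>1 \<omega>) \<le> y then 1 else 0) * hermite q (\<xi>1 \<omega>) \<partial>M)"

definition hermite_rank :: "'a measure \<Rightarrow> (real \<Rightarrow> real) \<Rightarrow> ('a \<Rightarrow> real) \<Rightarrow> nat" where
  "hermite_rank M G \<xi>1 = (LEAST q. 1 \<le> q \<and> (\<exists>y. Jcoef M G \<xi>1 q y \<noteq> 0))"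

definition dnr :: "'a measure \<Rightarrow> (nat \<Rightarrow> 'a \<Rightarrow> real) \<Rightarrow> nat \<Rightarrow> nat \<Rightarrow> real" where
  "dnr M \<xi> r n = sqrt (prob_space.variance M (\<lambda>\<omega>. \<Sum>i=1..n. hermite r (\<xi> i \<omega>)))"

definition gen_inv :: "(real \<Rightarrow> real) \<Rightarrow> real \<Rightarrow> real" where
  "gen_inv F x = Inf {t. x \<le> F t}"

definition Hn :: "(real \<Rightarrow> real) \<Rightarrow> real \<Rightarrow> real \<Rightarrow> real \<Rightarrow> real" where
  "Hn F Ymax h x =
     (if x < Ymax - h then F x
      else if x > Ymax + h then F (x - h)
      else F (Ymax - h) + (x - (Ymax - h)) / (2 * h) * (F Ymax - F (Ymax - h)))"

definition Xni :: "(nat \<Rightarrow> real) \<Rightarrow> real \<Rightarrow> real \<Rightarrow> nat \<Rightarrow> nat \<Rightarrow> real" where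
  "Xni Y h \<tau> n i = (if int i \<le> \<lfloor>real n * \<tau>\<rfloor> then Y i else Y i + h)"

definition Yni :: "(real \<Rightarrow> real) \<Rightarrow> (nat \<Rightarrow> real) \<Rightarrow> real \<Rightarrow> real \<Rightarrow> nat \<Rightarrow> nat \<Rightarrow> real" where
  "Yni F Y h \<tau> n i = Hn F (Max (Y ` {1..n})) h (Xni Y h \<tau> n i)"

definition order_stat :: "(nat \<Rightarrow> real) \<Rightarrow> nat \<Rightarrow> nat \<Rightarrow> real" where
  "order_stat v n i = sort (map v [1..<n+1]) ! (i - 1)"

text \<open>Piecewise linear interpolation on [0,1] through (0,0), (i/(n+1), w i) for i=1..n, (1,1).\<close>
definition interp_quantile :: "nat \<Rightarrow> (nat \<Rightarrow> real) \<Rightarrow> real \<Rightarrow> real" where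
  "interp_quantile n w x =
     (let v = (\<lambda>k::nat. if k = 0 then 0 else if k \<le> n then w k else 1);
          k = nat \<lfloor>x * real (n + 1)\<rfloor>
      in if 1 \<le> x then 1 else v k + (x * real (n + 1) - real k) * (v (k + 1) - v k))"

definition Ftilde_inv :: "(real \<Rightarrow> real) \<Rightarrow> (nat \<Rightarrow> real) \<Rightarrow> real \<Rightarrow> real \<Rightarrow> nat \<Rightarrow> real \<Rightarrow> real" where
  "Ftilde_inv F Y h \<tau> n = interp_quantile n (order_stat (Yni F Y h \<tau> n) n)"

text \<open>Z_n is extended-real valued so that
  suprema can be written literally.\<close>
definition bigOP :: "'a measure \<Rightarrow> (nat \<Rightarrow> 'a \<Rightarrow> ereal) \<Rightarrow> (nat \<Rightarrow> real) \<Rightarrow> bool" where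
  "bigOP M Z a \<longleftrightarrow> (\<forall>\<epsilon>>0. \<exists>K N. \<forall>n\<ge>N. \<exists>A\<in>sets M.
      {\<omega>\<in>space M. Z n \<omega> > ereal (K * a n)} \<subseteq> A \<and> measure M A \<le> \<epsilon>)"

end

theory Submission
  imports Defs
begin

lemma herm_integrable:
  "integrable lborel (\<lambda>x. std_normal_density x * (x^k * hermite q x))"
proof (induction q arbitrary: k rule: less_induct)
  case (less q)
  show ?case
  proof (cases q)
    case 0 then show ?thesis using integrable_std_normal_moment[of k] by simp
  next
    case (Suc m)
    show ?thesis
    proof (cases m)
      case 0 then show ?thesis using Suc integrable_std_normal_moment[of "Suc k"] by (simp add: mult_ac)
    next
      case (Suc p)
      have a: "integrable lborel (\<lambda>x. std_normal_density x * (x^(Suc k) * hermite (Suc p) x))"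
        using less[of "Suc p" "Suc k"] \<open>q = Suc m\<close> Suc by blast
      have b: "integrable lborel (\<lambda>x. std_normal_density x * (x^k * hermite p x))"
        using less \<open>q = Suc m\<close> Suc by auto
      have "integrable lborel (\<lambda>x. std_normal_density x * (x^(Suc k) * hermite (Suc p) x)
              - real (Suc p) * (std_normal_density x * (x^k * hermite p x)))"
        using a b by (intro Bochner_Integration.integrable_diff integrable_mult_right)
      moreover have "(\<lambda>x. std_normal_density x * (x^k * hermite q x)) = (\<lambda>x. std_normal_density x * (x^(Suc k) * hermite (Suc p) x)
              - real (Suc p) * (std_normal_density x * (x^k * hermite p x)))"
        using \<open>q = Suc m\<close> Suc by (simp add: fun_eq_iff algebra_simps del: of_nat_Suc)
      ultimately show ?thesis by simp
    qed
  qed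
qed

definition Iq :: "nat \<Rightarrow> nat \<Rightarrow> real" where
  "Iq q k = (\<integral>x. std_normal_density x * (x^k * hermite q x) \<partial>lborel)"

lemma moment_rec: "Iq 0 (Suc (Suc k)) = real (Suc k) * Iq 0 k"
proof (cases "even k")
  case True
  then obtain j where k: "k = 2*j" by (auto elim: evenE)
  have e1: "Iq 0 k = fact (2 * j) / (2^j * fact j)"
    using integral_std_normal_moment_even[of j] by (simp add: Iq_def k)
  have e2: "Iq 0 (Suc (Suc k)) = fact (2 * Suc j) / (2^Suc j * fact (Suc j))"
    using integral_std_normal_moment_even[of "Suc j"] by (simp add: Iq_def k)
  have "fact (2 * Suc j) = (real (2*j+2) * real (2*j+1)) * (fact (2*j) :: real)"
    by (simp add: fact_Suc algebra_simps)
  moreover have "(2::real)^Suc j * fact (Suc j) = real (2*j+2) * (2^j * fact j)"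
    by (simp add: algebra_simps)
  ultimately have "Iq 0 (Suc (Suc k)) = real (2*j+1) * (fact (2 * j) / (2^j * fact j))"
    using e2 by (simp add: field_simps del: of_nat_add of_nat_mult of_nat_Suc fact_Suc power_Suc)
  then show ?thesis using e1 k by simp
next
  case False
  then obtain j where k: "k = 2*j+1" using oddE by blast
  have "Iq 0 k = 0" using integral_std_normal_moment_odd[of j] by (simp add: Iq_def k)
  moreover have "Iq 0 (Suc (Suc k)) = 0" using integral_std_normal_moment_odd[of "Suc j"]
    by (simp add: Iq_def k)
  ultimately show ?thesis by simp
qed

lemma Iq_rec: "Iq (Suc (Suc q)) k = Iq (Suc q) (Suc k) - real (Suc q) * Iq q k"
proof -
  have "Iq (Suc (Suc q)) k = (\<integral>x. std_normal_density x * (x^(Suc k) * hermite (Suc q) x)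
              - real (Suc q) * (std_normal_density x * (x^k * hermite q x)) \<partial>lborel)"
    unfolding Iq_def by (rule Bochner_Integration.integral_cong) (simp_all add: algebra_simps)
  also have "\<dots> = Iq (Suc q) (Suc k) - real (Suc q) * Iq q k"
    unfolding Iq_def
    by (subst Bochner_Integration.integral_diff[OF herm_integrable integrable_mult_right[OF herm_integrable]])
       (simp only: integral_mult_right_zero)
  finally show ?thesis .
qed

lemma Iq_one: "Iq (Suc 0) k = Iq 0 (Suc k)"
  unfolding Iq_def by (simp add: mult_ac)

lemma stein: "Iq (Suc q) k = real k * Iq q (k - 1)"
proof (induction q arbitrary: k rule: less_induct)
  case (less q)
  show ?case
  proof (cases q)
    case 0
    show ?thesis
    proof (cases k)
      case 0 then show ?thesis using \<open>q=0\<close> Iq_one integral_std_normal_moment_odd[of 0]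
        by (simp add: Iq_def)
    next
      case (Suc k') then show ?thesis using \<open>q=0\<close> Iq_one moment_rec[of k'] by simp
    qed
  next
    case (Suc p)
    have IH1: "\<And>k. Iq (Suc p) k = real k * Iq p (k - 1)" using less Suc by auto
    have r: "Iq (Suc q) k = (real k - real p) * Iq p k"
      using Iq_rec[of p k] IH1[of "Suc k"] Suc by (simp add: algebra_simps)
    show ?thesis
    proof (cases k)
      case 0
      show ?thesis
      proof (cases p)
        case 0 then show ?thesis using r \<open>k=0\<close> by simp
      next
        case (Suc p')
        have "Iq p 0 = 0" using less[of p'] Suc \<open>q = Suc p\<close> by simp
        then show ?thesis using r \<open>k=0\<close> by simp
      qed
    next
      case (Suc k')
      show ?thesis
      proof (cases p)
        case 0
        then show ?thesis using r \<open>k = Suc k'\<close> \<open>q = Suc p\<close> Iq_one by simp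
      next
        case (Suc p')
        have a: "Iq (Suc p) k' = Iq p k - real p * Iq p' k'"
          using Iq_rec[of p' k'] Suc \<open>k = Suc k'\<close> by simp
        have b: "Iq p k = real k * Iq p' k'" using less[of p'] Suc \<open>q = Suc p\<close> \<open>k = Suc k'\<close> by simp
        have c1: "Iq (Suc q) k = (real k - real p) * (real k * Iq p' k')" using r b by simp
        have c2: "Iq q (k - 1) = (real k - real p) * Iq p' k'"
          using a b \<open>q = Suc p\<close> \<open>k = Suc k'\<close> by (simp add: algebra_simps)
        show ?thesis unfolding c1 c2 by (simp only: mult_ac)
      qed
    qed
  qed
qed

lemma herm_mean0: "1 \<le> q \<Longrightarrow> (\<integral>x. std_normal_density x * hermite q x \<partial>lborel) = 0"
  using stein[of "q - 1" 0] unfolding Iq_def by (cases q) auto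

lemma herm_integrable0: "integrable lborel (\<lambda>x. std_normal_density x * hermite q x)"
  using herm_integrable[of 0 q] by simp

lemma std1:
  assumes M: "prob_space M" and meas: "\<And>i. \<xi> i \<in> borel_measurable M"
    and gauss: "gaussian_process M \<xi>"
    and mean0: "(\<integral>\<omega>. \<xi> 1 \<omega> \<partial>M) = 0"
    and var1: "(\<integral>\<omega>. (\<xi> 1 \<omega>)\<^sup>2 \<partial>M) = 1"
  shows "distributed M lborel (\<xi> 1) std_normal_density"
proof -
  interpret prob_space M by fact
  have "normal_rv M (\<lambda>\<omega>. \<Sum>i\<in>{1::nat}. (\<lambda>_. 1) i * \<xi> i \<omega>)"
    using gauss[unfolded gaussian_process_def, rule_format, of "{1}" "\<lambda>_. 1"] by simp
  then have nr: "normal_rv M (\<xi> 1)" by simp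
  obtain \<mu> where c: "(AE \<omega> in M. \<xi> 1 \<omega> = \<mu>) \<or>
          (\<exists>\<sigma>>0. distributed M lborel (\<xi> 1) (\<lambda>x. ennreal (normal_density \<mu> \<sigma> x)))"
    using nr unfolding normal_rv_def by blast
  show ?thesis
  proof (cases "AE \<omega> in M. \<xi> 1 \<omega> = \<mu>")
    case True
    have "(\<integral>\<omega>. \<xi> 1 \<omega> \<partial>M) = (\<integral>\<omega>. \<mu> \<partial>M)"
      using True by (intro integral_cong_AE) (auto simp: meas)
    then have "\<mu> = 0" using mean0 by (simp add: prob_space)
    have "(\<integral>\<omega>. (\<xi> 1 \<omega>)\<^sup>2 \<partial>M) = (\<integral>\<omega>. \<mu>\<^sup>2 \<partial>M)"
      using True meas[of 1] by (intro integral_cong_AE) (auto)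
    then show ?thesis using var1 \<open>\<mu> = 0\<close> by (simp add: prob_space)
  next
    case False
    then obtain \<sigma> where s: "\<sigma> > 0" and D: "distributed M lborel (\<xi> 1) (\<lambda>x. ennreal (normal_density \<mu> \<sigma> x))"
      using c by blast
    have "expectation (\<xi> 1) = \<mu>" using normal_distributed_expectation[OF s D] .
    then have "\<mu> = 0" using mean0 by simp
    have "variance (\<xi> 1) = \<sigma>\<^sup>2" using normal_distributed_variance[OF s D] .
    then have "\<sigma>\<^sup>2 = 1" using var1 mean0 by simp
    then have "\<sigma> = 1" using s by (simp add: power2_eq_1_iff)
    then show ?thesis using D \<open>\<mu> = 0\<close> by simp
  qed
qed

lemma statj:
  assumes meas: "\<And>i. \<xi> i \<in> borel_measurable M"
    and stat: "stationary_process M \<xi>" and j: "1 \<le> j"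
  shows "distr M borel (\<xi> j) = distr M borel (\<xi> 1)"
proof -
  have e: "distr M (PiM {1::nat} (\<lambda>_. borel)) (\<lambda>\<omega>. restrict (\<lambda>i. \<xi> (i + (j - 1)) \<omega>) {1}) =
        distr M (PiM {1} (\<lambda>_. borel)) (\<lambda>\<omega>. restrict (\<lambda>i. \<xi> i \<omega>) {1})"
    using stat unfolding stationary_process_def by blast
  have m1: "(\<lambda>\<omega>. restrict (\<lambda>i. \<xi> (i + (j - 1)) \<omega>) {1::nat}) \<in> measurable M (PiM {1} (\<lambda>_. borel))"
    by (rule measurable_restrict) (simp add: meas)
  have m2: "(\<lambda>\<omega>. restrict (\<lambda>i. \<xi> i \<omega>) {1::nat}) \<in> measurable M (PiM {1} (\<lambda>_. borel))"
    by (rule measurable_restrict) (simp add: meas)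
  have g: "(\<lambda>g. g 1) \<in> measurable (PiM {1::nat} (\<lambda>_. borel)) (borel :: real measure)"
    by (rule measurable_component_singleton) simp
  have "distr M borel ((\<lambda>g. g 1) \<circ> (\<lambda>\<omega>. restrict (\<lambda>i. \<xi> (i + (j - 1)) \<omega>) {1::nat}))
     = distr (distr M (PiM {1::nat} (\<lambda>_. borel)) (\<lambda>\<omega>. restrict (\<lambda>i. \<xi> (i + (j - 1)) \<omega>) {1})) borel (\<lambda>g. g 1)"
    by (rule distr_distr[OF g m1, symmetric])
  also have "\<dots> = distr (distr M (PiM {1} (\<lambda>_. borel)) (\<lambda>\<omega>. restrict (\<lambda>i. \<xi> i \<omega>) {1})) borel (\<lambda>g. g 1)"
    by (simp only: e)
  also have "\<dots> = distr M borel ((\<lambda>g. g 1) \<circ> (\<lambda>\<omega>. restrict (\<lambda>i. \<xi> i \<omega>) {1::nat}))"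
    by (rule distr_distr[OF g m2])
  finally have "distr M borel ((\<lambda>g. g 1) \<circ> (\<lambda>\<omega>. restrict (\<lambda>i. \<xi> (i + (j - 1)) \<omega>) {1::nat}))
      = distr M borel ((\<lambda>g. g 1) \<circ> (\<lambda>\<omega>. restrict (\<lambda>i. \<xi> i \<omega>) {1::nat}))" .
  moreover have "(\<lambda>g. g 1) \<circ> (\<lambda>\<omega>. restrict (\<lambda>i. \<xi> (i + (j - 1)) \<omega>) {1::nat}) = \<xi> j"
    using j by (auto simp: fun_eq_iff)
  moreover have "(\<lambda>g. g 1) \<circ> (\<lambda>\<omega>. restrict (\<lambda>i. \<xi> i \<omega>) {1::nat}) = \<xi> 1"
    by (auto simp: fun_eq_iff)
  ultimately show ?thesis by simp
qed

lemma stdj: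
  assumes M: "prob_space M" and meas: "\<And>i. \<xi> i \<in> borel_measurable M"
    and gauss: "gaussian_process M \<xi>" and stat: "stationary_process M \<xi>"
    and mean0: "(\<integral>\<omega>. \<xi> 1 \<omega> \<partial>M) = 0"
    and var1: "(\<integral>\<omega>. (\<xi> 1 \<omega>)\<^sup>2 \<partial>M) = 1" and j: "1 \<le> j"
  shows "distributed M lborel (\<xi> j) std_normal_density"
proof -
  have D: "distributed M lborel (\<xi> 1) std_normal_density" by (rule std1[OF assms(1,2,3,5,6)])
  have "distr M lborel (\<xi> j) = distr M borel (\<xi> j)" by (rule distr_cong) auto
  also have "\<dots> = distr M borel (\<xi> 1)" by (rule statj[OF meas stat j])
  also have "\<dots> = distr M lborel (\<xi> 1)" by (rule distr_cong) auto
  finally show ?thesis using D meas[of j] unfolding distributed_def by simp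
qed

lemma herm_xi:
  assumes M: "prob_space M" and meas: "\<And>i. \<xi> i \<in> borel_measurable M"
    and gauss: "gaussian_process M \<xi>" and stat: "stationary_process M \<xi>"
    and mean0: "(\<integral>\<omega>. \<xi> 1 \<omega> \<partial>M) = 0"
    and var1: "(\<integral>\<omega>. (\<xi> 1 \<omega>)\<^sup>2 \<partial>M) = 1" and j: "1 \<le> j"
  shows "integrable M (\<lambda>\<omega>. hermite q (\<xi> j \<omega>))"
    and "1 \<le> q \<Longrightarrow> (\<integral>\<omega>. hermite q (\<xi> j \<omega>) \<partial>M) = 0"
proof -
  have D: "distributed M lborel (\<xi> j) std_normal_density" by (rule stdj[OF assms])
  have hm: "hermite q \<in> borel_measurable lborel"
  proof -
    have "\<And>x. isCont (hermite q) x"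
      subgoal for x by (induction q x rule: hermite.induct) (auto intro!: continuous_intros)
      done
    then have "continuous_on UNIV (hermite q)" by (simp add: continuous_at_imp_continuous_on)
    then show ?thesis by (simp add: borel_measurable_continuous_onI)
  qed
  show "integrable M (\<lambda>\<omega>. hermite q (\<xi> j \<omega>))"
    using distributed_integrable[OF D hm] herm_integrable0[where q=q] by simp
  assume "1 \<le> q"
  show "(\<integral>\<omega>. hermite q (\<xi> j \<omega>) \<partial>M) = 0"
    using distributed_integral[OF D hm] herm_mean0[OF \<open>1 \<le> q\<close>] by simp
qed

lemma F_range:
  fixes F :: "real \<Rightarrow> real" and X :: "'a \<Rightarrow> real" and t :: real
  assumes M: "prob_space M" and F_def: "\<And>x. F x = measure M {\<omega>\<in>space M. X \<omega> \<le> x}"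
    and F_mono: "strict_mono F"
  shows "0 < F t" "F t < 1"
proof -
  interpret prob_space M by fact
  have "F (t - 1) < F t" "F t < F (t + 1)" using F_mono by (auto intro: strict_monoD)
  moreover have "0 \<le> F (t - 1)" "F (t + 1) \<le> 1" using F_def by auto
  ultimately show "0 < F t" "F t < 1" by auto
qed

lemma gen_inv_F:
  assumes F_mono: "strict_mono (F :: real \<Rightarrow> real)"
  shows "gen_inv F (F t) = t"
proof -
  have "{s. F t \<le> F s} = {t..}"
    using F_mono by (auto simp: strict_mono_less_eq)
  then show ?thesis unfolding gen_inv_def by simp
qed

lemma f_bounded:
  fixes F :: "real \<Rightarrow> real" and X :: "'a \<Rightarrow> real"
  assumes M: "prob_space M" and F_def: "\<And>x. F x = measure M {\<omega>\<in>space M. X \<omega> \<le> x}"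
    and F_mono: "strict_mono F" and f_nonneg: "\<And>x. 0 \<le> f x" and lam: "0 < lam"
    and H3: "bdd_above ((\<lambda>x. (min x (1 - x)) powr (- 2 * lam) * f (gen_inv F x)) ` {0<..<1})"
  shows "\<exists>B\<ge>0. \<forall>t. f t \<le> B"
proof -
  obtain B where B0: "\<forall>y\<in>(\<lambda>x. (min x (1 - x)) powr (- 2 * lam) * f (gen_inv F x)) ` {0<..<1}. y \<le> B"
    using H3 unfolding bdd_above_def by (elim exE) (rule that)
  have B: "\<And>x. x \<in> {0<..<1} \<Longrightarrow> (min x (1 - x)) powr (- 2 * lam) * f (gen_inv F x) \<le> B"
    using B0 by simp
  have "f t \<le> B" for t
  proof -
    have x: "F t \<in> {0<..<1}" using F_range[OF M F_def F_mono] by auto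
    define m where "m = min (F t) (1 - F t)"
    have m: "0 < m" "m \<le> 1" using x by (auto simp: m_def)
    have m1: "1 \<le> m powr (- 2 * lam)"
    proof -
      have "m powr (- 2 * lam) = (1 / m) powr (2 * lam)" using m by (simp add: powr_divide powr_minus_divide)
      moreover have "1 \<le> 1 / m" using m by simp
      ultimately show ?thesis using lam by (simp add: ge_one_powr_ge_zero)
    qed
    have "f t \<le> m powr (- 2 * lam) * f t" using mult_right_mono[OF m1 f_nonneg[of t]]
      by simp
    also have "\<dots> \<le> B" using B[OF x] unfolding gen_inv_F[OF F_mono] m_def .
    finally show ?thesis .
  qed
  moreover have "0 \<le> B" using calculation[of 0] f_nonneg[of 0] by linarith
  ultimately show ?thesis by blast
qed

lemma F_lip:
  assumes M: "prob_space M" and F_def: "\<And>x. F x = measure M {\<omega>\<in>space M. X \<omega> \<le> x}"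
    and Xm: "X \<in> borel_measurable M"
    and f_dens: "distributed M lborel X (\<lambda>x. ennreal (f x))"
    and fB: "\<And>t. f t \<le> B" and B: "0 \<le> B" and ab: "a \<le> b"
  shows "F b - F a \<le> B * (b - a)"
proof -
  interpret prob_space M by fact
  define S where "S = X -` {a<..b} \<inter> space M"
  have Sm: "S \<in> sets M" unfolding S_def using Xm by measurable
  have am: "{\<omega>\<in>space M. X \<omega> \<le> a} \<in> sets M" using Xm by measurable
  have un: "{\<omega>\<in>space M. X \<omega> \<le> b} = {\<omega>\<in>space M. X \<omega> \<le> a} \<union> S"
    unfolding S_def using ab by auto
  have "measure M {\<omega>\<in>space M. X \<omega> \<le> b} = measure M {\<omega>\<in>space M. X \<omega> \<le> a} + measure M S"
    unfolding un by (rule finite_measure_Union[OF am Sm]) (auto simp: S_def)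
  then have e: "F b - F a = measure M S" using F_def by simp
  have "emeasure M S = (\<integral>\<^sup>+x. ennreal (f x) * indicator {a<..b} x \<partial>lborel)"
    unfolding S_def by (rule distributed_emeasure[OF f_dens]) simp
  also have "\<dots> \<le> (\<integral>\<^sup>+x. ennreal B * indicator {a<..b} x \<partial>lborel)"
    by (intro nn_integral_mono) (simp add: fB ennreal_leI split: split_indicator)
  also have "\<dots> = ennreal B * emeasure lborel {a<..b}"
    by (rule nn_integral_cmult_indicator) simp
  also have "\<dots> = ennreal (B * (b - a))" using ab B by (simp add: ennreal_mult)
  finally have "ennreal (measure M S) \<le> ennreal (B * (b - a))"
    by (simp add: emeasure_eq_measure)
  then have "measure M S \<le> B * (b - a)" using ab B by (simp add: ennreal_le_iff)
  then show ?thesis using e by simp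
qed

lemma Hn_bound:
  fixes F :: "real \<Rightarrow> real"
  assumes mono: "mono F" and r0: "\<And>x. 0 \<le> F x" and r1: "\<And>x. F x \<le> 1"
    and lip: "\<And>a b. a \<le> b \<Longrightarrow> F b - F a \<le> B * (b - a)"
    and h: "0 < h" and ym: "y \<le> m" and x: "x = y \<or> x = y + h"
  shows "\<bar>Hn F m h x - F y\<bar> \<le> 2 * B * h" and "0 \<le> Hn F m h x" and "Hn F m h x \<le> 1"
proof -
  have "F 0 \<le> F 1" using mono by (simp add: monoD)
  then have B: "0 \<le> B" using lip[of 0 1] by simp
  have "\<bar>Hn F m h x - F y\<bar> \<le> 2 * B * h \<and> 0 \<le> Hn F m h x \<and> Hn F m h x \<le> 1"
  proof (cases "x < m - h")
    case True
    then have e: "Hn F m h x = F x" by (simp add: Hn_def)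
    have "\<bar>F x - F y\<bar> \<le> B * h"
      using x
    proof
      assume "x = y" then show ?thesis using B h by simp
    next
      assume "x = y + h"
      then have "F x - F y \<le> B * h" "F y \<le> F x" using lip[of y x] mono h by (auto simp: mono_def)
      then show ?thesis by simp
    qed
    then show ?thesis using e r0 r1 B h by (auto intro: order_trans)
  next
    case False
    then have nx: "\<not> x > m + h" using x ym h by auto
    define t where "t = (x - (m - h)) / (2 * h)"
    have e: "Hn F m h x = F (m - h) + t * (F m - F (m - h))"
      using False nx by (simp add: Hn_def t_def)
    have t: "0 \<le> t" "t \<le> 1" using False nx h by (auto simp: t_def field_simps)
    have fm: "F (m - h) \<le> F m" "F (m - 2*h) \<le> F (m - h)" using mono h by (auto simp: mono_def)
    have lo: "F (m - h) \<le> Hn F m h x" using e t fm by simp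
    have hi: "Hn F m h x \<le> F m"
    proof -
      have "t * (F m - F (m - h)) \<le> 1 * (F m - F (m - h))" using t fm by (intro mult_right_mono) auto
      then show ?thesis using e by simp
    qed
    have "y \<ge> m - 2 * h" using False x h by auto
    then have y1: "F (m - 2*h) \<le> F y" and y2: "F y \<le> F m" using mono ym by (auto simp: mono_def)
    have "F m - F (m - 2*h) \<le> B * (2*h)" using lip[of "m - 2*h" m] h by simp
    then show ?thesis using lo hi y1 y2 fm r0[of "m-h"] r1[of m] by (auto simp: abs_if)
  qed
  then show "\<bar>Hn F m h x - F y\<bar> \<le> 2 * B * h" "0 \<le> Hn F m h x" "Hn F m h x \<le> 1" by auto
qed

lemma cnt_list: "card {j\<in>{1..n}. P (V j)} = length (filter P (map V [1..<n+1]))"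
proof (induction n)
  case 0 then show ?case by simp
next
  case (Suc n)
  have s: "{j\<in>{1..Suc n}. P (V j)} = {j\<in>{1..n}. P (V j)} \<union> (if P (V (Suc n)) then {Suc n} else {})"
    by (auto simp: le_Suc_eq)
  have l: "[1..<Suc n + 1] = [1..<n+1] @ [Suc n]" by simp
  show ?case unfolding s l using Suc by (auto simp: card_insert_if)
qed

lemma filter_sort: "length (filter P (sort xs)) = length (filter P xs)"
  by (metis mset_filter mset_sort size_mset)

lemma sorted_count:
  fixes s :: "real list"
  assumes "sorted s" "i < length s"
  shows "i + 1 \<le> length (filter (\<lambda>v. v \<le> s ! i) s)"
    and "length (filter (\<lambda>v. v < s ! i) s) \<le> i"
proof -
  have "{0..i} \<subseteq> {j. j < length s \<and> s ! j \<le> s ! i}"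
    using assms by (auto intro: sorted_nth_mono)
  then have "card {0..i} \<le> card {j. j < length s \<and> s ! j \<le> s ! i}"
    by (intro card_mono) auto
  then show "i + 1 \<le> length (filter (\<lambda>v. v \<le> s ! i) s)"
    by (simp add: length_filter_conv_card)
  have "{j. j < length s \<and> s ! j < s ! i} \<subseteq> {0..<i}"
  proof
    fix j assume j: "j \<in> {j. j < length s \<and> s ! j < s ! i}"
    have "\<not> i \<le> j" using j assms sorted_nth_mono[of s i j] by auto
    then show "j \<in> {0..<i}" by simp
  qed
  then have "card {j. j < length s \<and> s ! j < s ! i} \<le> card {0..<i}"
    by (intro card_mono) auto
  then show "length (filter (\<lambda>v. v < s ! i) s) \<le> i"
    by (simp add: length_filter_conv_card)
qed

lemma os_props:
  fixes V :: "nat \<Rightarrow> real"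
  assumes k: "1 \<le> k" "k \<le> n"
  shows "k \<le> card {j\<in>{1..n}. V j \<le> order_stat V n k}"
    and "card {j\<in>{1..n}. V j < order_stat V n k} \<le> k - 1"
    and "\<exists>j\<in>{1..n}. order_stat V n k = V j"
proof -
  define s where "s = sort (map V [1..<n+1])"
  have os: "order_stat V n k = s ! (k - 1)" unfolding order_stat_def s_def by simp
  have ls: "length s = n" by (simp add: s_def)
  have ss: "sorted s" by (simp add: s_def)
  have i: "k - 1 < length s" using k ls by simp
  have c1: "card {j\<in>{1..n}. V j \<le> s!(k-1)} = length (filter (\<lambda>v. v \<le> s!(k-1)) s)"
    using cnt_list[where P="\<lambda>v. v \<le> s!(k-1)" and n=n and V=V] filter_sort[where P="\<lambda>v. v \<le> s!(k-1)" and xs="map V [1..<n+1]"]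
    unfolding s_def[symmetric] by simp
  have c2: "card {j\<in>{1..n}. V j < s!(k-1)} = length (filter (\<lambda>v. v < s!(k-1)) s)"
    using cnt_list[where P="\<lambda>v. v < s!(k-1)" and n=n and V=V] filter_sort[where P="\<lambda>v. v < s!(k-1)" and xs="map V [1..<n+1]"]
    unfolding s_def[symmetric] by simp
  have "k \<le> length (filter (\<lambda>v. v \<le> s ! (k - 1)) s)" using sorted_count(1)[OF ss i] k by simp
  then show "k \<le> card {j\<in>{1..n}. V j \<le> order_stat V n k}"
    unfolding os c1 .
  have "length (filter (\<lambda>v. v < s ! (k - 1)) s) \<le> k - 1" using sorted_count(2)[OF ss i] .
  then show "card {j\<in>{1..n}. V j < order_stat V n k} \<le> k - 1"
    unfolding os c2 .
  have "s ! (k - 1) \<in> set s" using i by simp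
  moreover have "set s = V ` {1..n}" unfolding s_def
    by (simp add: atLeastLessThanSuc_atLeastAtMost del: upt_Suc)
  ultimately have "s ! (k - 1) \<in> V ` {1..n}" by simp
  then show "\<exists>j\<in>{1..n}. order_stat V n k = V j" unfolding os by auto
qed

lemma quant:
  fixes U V :: "nat \<Rightarrow> real"
  assumes n: "1 \<le> n" and e: "0 \<le> e" and E: "0 \<le> E"
    and hU: "\<And>j. j \<in> {1..n} \<Longrightarrow> 0 < U j \<and> U j < 1"
    and hV: "\<And>j. j \<in> {1..n} \<Longrightarrow> \<bar>V j - U j\<bar> \<le> e \<and> 0 \<le> V j \<and> V j \<le> 1"
    and hE: "\<And>x. x \<in> {0<..<1} \<Longrightarrow> \<bar>real (card {j\<in>{1..n}. U j \<le> x}) - real n * x\<bar> \<le> E"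
    and k: "1 \<le> k" "k \<le> n"
  shows "\<bar>order_stat V n k - real k / real (n + 1)\<bar> \<le> e + (E + 1) / real n"
proof -
  define cU where "cU y = real (card {j\<in>{1..n}. U j \<le> y})" for y
  have cn: "cU y \<le> real n" for y
  proof -
    have "card {j\<in>{1..n}. U j \<le> y} \<le> card {1..n}" by (intro card_mono) auto
    then show ?thesis by (simp add: cU_def)
  qed
  have low: "cU y \<ge> real n * min y 1 - E" for y
  proof (cases "y \<le> 0")
    case True then show ?thesis using E n by (simp add: cU_def) (smt (verit) mult_nonneg_nonpos of_nat_0_le_iff)
  next
    case False
    show ?thesis
    proof (cases "y < 1")
      case True then show ?thesis using hE[of y] False by (simp add: cU_def)
    next
      case False
      have se: "{j\<in>{1..n}. U j \<le> y} = {1..n}" using hU False by force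
      have "cU y = real n" unfolding cU_def se by simp
      then show ?thesis using E False by simp
    qed
  qed
  have upp: "cU y \<le> real n * max y 0 + E" for y
  proof (cases "y \<le> 0")
    case True
    have se: "{j\<in>{1..n}. U j \<le> y} = {}" using hU True by force
    have "cU y = 0" unfolding cU_def se by simp
    then show ?thesis using E True by simp
  next
    case False
    show ?thesis
    proof (cases "y < 1")
      case True then show ?thesis using hE[of y] False by (simp add: cU_def)
    next
      case False
      then have "real n * 1 \<le> real n * max y 0" by (intro mult_left_mono) auto
      then show ?thesis using cn[of y] E by linarith
    qed
  qed
  define u where "u = order_stat V n k"
  obtain j0 where j0: "j0 \<in> {1..n}" "u = V j0" using os_props(3)[OF k, of V] u_def by auto
  have u01: "0 \<le> u" "u \<le> 1" using hV[OF j0(1)] j0 by auto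
  have nr: "real n \<ge> 1" using n by simp
  have "{j\<in>{1..n}. V j \<le> u} \<subseteq> {j\<in>{1..n}. U j \<le> u + e}" using hV by force
  then have "card {j\<in>{1..n}. V j \<le> u} \<le> card {j\<in>{1..n}. U j \<le> u + e}" by (intro card_mono) auto
  then have "real k \<le> cU (u + e)" using os_props(1)[OF k, of V] unfolding cU_def u_def by linarith
  also have "\<dots> \<le> real n * (u + e) + E" using upp[of "u + e"] u01 e by simp
  finally have L: "real k \<le> real n * (u + e) + E" .
  define y where "y = u - e - 1 / real n"
  have "{j\<in>{1..n}. U j \<le> y} \<subseteq> {j\<in>{1..n}. V j < u}"
  proof
    fix j assume "j \<in> {j\<in>{1..n}. U j \<le> y}"
    then have j: "j \<in> {1..n}" "U j \<le> y" by auto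
    have "V j \<le> U j + e" using hV[OF j(1)] by linarith
    also have "\<dots> < u" using j(2) nr unfolding y_def
      using divide_pos_pos[of 1 "real n"] by linarith
    finally show "j \<in> {j\<in>{1..n}. V j < u}" using j by simp
  qed
  then have "card {j\<in>{1..n}. U j \<le> y} \<le> card {j\<in>{1..n}. V j < u}" by (intro card_mono) auto
  then have "cU y \<le> real (k - 1)" using os_props(2)[OF k, of V] unfolding cU_def u_def by linarith
  then have c2: "real n * min y 1 - E \<le> real k - 1" using low[of y] k by (simp add: of_nat_diff)
  have U: "real n * u \<le> real k + real n * e + E"
  proof (cases "y < 1")
    case True
    then have "real n * y - E \<le> real k - 1" using c2 by simp
    then show ?thesis unfolding y_def using nr by (simp add: algebra_simps)
  next
    case False
    then have "real n - E \<le> real k - 1" using c2 by simp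
    moreover have "real n * u \<le> real n" using u01 nr by simp
    ultimately show ?thesis using nr e by (smt (verit) mult_nonneg_nonneg of_nat_0_le_iff)
  qed
  have b1: "\<bar>u - real k / real n\<bar> \<le> e + E / real n"
  proof -
    have "u - real k / real n = (real n * u - real k) / real n" using nr by (simp add: field_simps)
    also have "\<dots> \<le> (real n * e + E) / real n" using U nr by (intro divide_right_mono) auto
    also have "\<dots> = e + E / real n" using nr by (simp add: field_simps)
    finally have A: "u - real k / real n \<le> e + E / real n" .
    have "real k / real n - u = (real k - real n * u) / real n" using nr by (simp add: field_simps)
    also have "\<dots> \<le> (real n * e + E) / real n" using L nr by (intro divide_right_mono) (auto simp: algebra_simps)
    also have "\<dots> = e + E / real n" using nr by (simp add: field_simps)
    finally have "real k / real n - u \<le> e + E / real n" .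
    then show ?thesis using A by linarith
  qed
  have b2: "\<bar>real k / real n - real k / real (n + 1)\<bar> \<le> 1 / real n"
  proof -
    have "real k / real n - real k / real (n + 1) = real k / (real n * (real n + 1))"
      using nr by (simp add: field_simps)
    also have "\<dots> \<le> real n / (real n * (real n + 1))"
      using k nr by (intro divide_right_mono) auto
    also have "\<dots> = 1 / (real n + 1)" using nr by (simp add: divide_simps)
    also have "\<dots> \<le> 1 / real n" using nr by (intro divide_left_mono) auto
    finally have "real k / real n - real k / real (n + 1) \<le> 1 / real n" .
    moreover have "real k / real (n + 1) \<le> real k / real n" using nr by (intro divide_left_mono) auto
    ultimately show ?thesis by linarith
  qed
  have "\<bar>u - real k / real (n + 1)\<bar> \<le> e + E / real n + 1 / real n" using b1 b2 by linarith
  then show ?thesis unfolding u_def by (simp add: add_divide_distrib)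
qed

lemma powr_helper:
  fixes y N lam :: real
  assumes y: "0 < y" "y \<le> 1 / N" and N: "1 \<le> N" and lam: "lam < 1"
  shows "y powr (- lam) * (N * y) \<le> N powr lam"
proof -
  have "y powr (1 - lam) = y powr (- lam + 1)" by simp
  also have "\<dots> = y powr (- lam) * y powr 1" by (rule powr_add)
  finally have "y powr (- lam) * y = y powr (1 - lam)" using y by simp
  also have "\<dots> \<le> (1 / N) powr (1 - lam)" using y lam by (intro powr_mono2) auto
  also have "\<dots> = N powr (lam - 1)" using N by (simp add: powr_divide powr_minus_divide[symmetric])
  finally have "y powr (- lam) * y * N \<le> N powr (lam - 1) * N" using N by (intro mult_right_mono) auto
  also have "N powr (lam - 1) * N = N powr lam"
  proof -
    have "N powr lam = N powr ((lam - 1) + 1)" by simp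
    also have "\<dots> = N powr (lam - 1) * N powr 1" by (rule powr_add)
    finally show ?thesis using N by simp
  qed
  finally show ?thesis by (simp add: mult_ac)
qed

lemma interp_bound:
  fixes w :: "nat \<Rightarrow> real"
  assumes n: "1 \<le> n" and e: "0 \<le> e"
    and hw: "\<And>k. k \<in> {1..n} \<Longrightarrow> \<bar>w k - real k / real (n + 1)\<bar> \<le> e"
    and lam: "0 < lam" "lam < 1" and x: "x \<in> {0..1}"
  shows "\<bar>interp_quantile n w x - x\<bar> \<le> e"
    and "(min x (1 - x)) powr (- lam) * \<bar>interp_quantile n w x - x\<bar> \<le> real (n + 1) powr lam * e"
proof -
  define N where "N = real (n + 1)"
  have N: "N \<ge> 2" using n by (simp add: N_def)
  define v where "v = (\<lambda>k::nat. if k = 0 then 0 else if k \<le> n then w k else 1)"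
  have hv: "\<bar>v k - real k / N\<bar> \<le> e" if "k \<le> n + 1" for k
  proof -
    show ?thesis
    proof (cases "k = 0")
      case True then show ?thesis using e by (simp add: v_def)
    next
      case k0: False
      show ?thesis
      proof (cases "k \<le> n")
        case True then have "k \<in> {1..n}" using k0 by simp
        then show ?thesis using hw[of k] True k0 by (simp add: v_def N_def)
      next
        case False then have "k = n + 1" using that by simp
        then show ?thesis using e N by (simp add: v_def N_def)
      qed
    qed
  qed
  have "\<bar>interp_quantile n w x - x\<bar> \<le> e \<and>
        (min x (1 - x)) powr (- lam) * \<bar>interp_quantile n w x - x\<bar> \<le> N powr lam * e"
  proof (cases "1 \<le> x")
    case True
    then have "interp_quantile n w x = 1" by (simp add: interp_quantile_def)
    then show ?thesis using True x e by simp
  next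
    case False
    then have x1: "x < 1" by simp
    define k where "k = nat \<lfloor>x * N\<rfloor>"
    define s where "s = x * N - real k"
    have fl0: "0 \<le> \<lfloor>x * N\<rfloor>" using x N by simp
    have kk: "real k = of_int \<lfloor>x * N\<rfloor>" using fl0 by (simp add: k_def)
    have s01: "0 \<le> s" "s < 1" unfolding s_def kk by linarith+
    have "real k \<le> x * N" using s01 by (simp add: s_def)
    also have "\<dots> < N" using x1 N by simp
    finally have kn: "k \<le> n" by (simp add: N_def)
    have iq: "interp_quantile n w x = v k + s * (v (k + 1) - v k)"
      using x1 unfolding interp_quantile_def Let_def v_def k_def s_def N_def by simp
    define a where "a = v k - real k / N"
    define b where "b = v (k + 1) - real (k + 1) / N"
    have a: "\<bar>a\<bar> \<le> e" using hv[of k] kn by (simp add: a_def)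
    have b: "\<bar>b\<bar> \<le> e" using hv[of "k+1"] kn by (simp add: b_def)
    have xe: "x = (real k + s) / N" using N by (simp add: s_def)
    have "interp_quantile n w x - x = v k + s * (v (k + 1) - v k) - (real k + s) / N"
      unfolding iq by (subst xe) (rule refl)
    also have "\<dots> = (1 - s) * a + s * b"
      unfolding a_def b_def using N by (simp add: field_simps)
    finally have dif: "interp_quantile n w x - x = (1 - s) * a + s * b" .
    have bd: "\<bar>interp_quantile n w x - x\<bar> \<le> (1 - s) * \<bar>a\<bar> + s * \<bar>b\<bar>"
      unfolding dif using s01 by (intro order_trans[OF abs_triangle_ineq]) (simp add: abs_mult)
    have B1: "\<bar>interp_quantile n w x - x\<bar> \<le> e"
    proof -
      have "(1 - s) * \<bar>a\<bar> + s * \<bar>b\<bar> \<le> (1 - s) * e + s * e"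
        using a b s01 by (intro add_mono mult_left_mono) auto
      moreover have "(1 - s) * e + s * e = e" by (simp add: algebra_simps)
      ultimately show ?thesis using bd by linarith
    qed
    have B2: "(min x (1 - x)) powr (- lam) * \<bar>interp_quantile n w x - x\<bar> \<le> N powr lam * e"
    proof (cases "1 / N \<le> min x (1 - x)")
      case True
      have "(min x (1 - x)) powr (- lam) \<le> (1 / N) powr (- lam)"
        using True N lam by (intro powr_mono2') auto
      also have "(1 / N) powr (- lam) = N powr lam" using N
        by (simp add: powr_divide powr_minus_divide)
      finally show ?thesis using B1 by (intro mult_mono) auto
    next
      case False
      show ?thesis
      proof (cases "x < 1 / N")
        case xs: True
        have "1 / N \<le> 1 / 2" using N by (intro divide_left_mono) auto
        then have mx: "min x (1 - x) = x" using xs by (simp add: min_def)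
        have "x * N < 1" using xs N by (simp add: field_simps)
        then have "k = 0" unfolding k_def using x by simp
        then have a0: "a = 0" by (simp add: a_def v_def)
        have sx: "s = N * x" using \<open>k = 0\<close> by (simp add: s_def)
        show ?thesis
        proof (cases "x = 0")
          case True then show ?thesis using e N by simp
        next
          case False
          then have xp: "0 < x" using x by simp
          have "\<bar>interp_quantile n w x - x\<bar> \<le> s * \<bar>b\<bar>" using bd a0 by simp
          also have "\<dots> \<le> s * e" using b s01 by (intro mult_left_mono) auto
          finally have "\<bar>interp_quantile n w x - x\<bar> \<le> (N * x) * e" using sx by simp
          then have "x powr (- lam) * \<bar>interp_quantile n w x - x\<bar> \<le> x powr (- lam) * ((N * x) * e)"
            by (intro mult_left_mono) auto
          also have "\<dots> = (x powr (- lam) * (N * x)) * e" by simp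
          also have "\<dots> \<le> N powr lam * e"
            using powr_helper[OF xp _ _ lam(2)] xs N e by (intro mult_right_mono) auto
          finally show ?thesis using mx by simp
        qed
      next
        case xs: False
        then have y: "1 - x < 1 / N" using False by (simp add: min_def split: if_splits)
        have my: "min x (1 - x) = 1 - x" using xs y by (simp add: min_def)
        have "real n < x * N" using y N by (simp add: field_simps N_def)
        then have "int n \<le> \<lfloor>x * N\<rfloor>" by (simp add: le_floor_iff)
        then have "real n \<le> real k" unfolding kk by (metis of_int_le_iff of_int_of_nat_eq)
        then have "k = n" using kn by simp
        then have b0: "b = 0" by (simp add: b_def v_def N_def)
        have sx: "1 - s = N * (1 - x)" using \<open>k = n\<close> by (simp add: s_def N_def algebra_simps)
        have yp: "0 < 1 - x" using x1 by simp
        have "\<bar>interp_quantile n w x - x\<bar> \<le> (1 - s) * \<bar>a\<bar>" using bd b0 by simp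
        also have "\<dots> \<le> (1 - s) * e" using a s01 by (intro mult_left_mono) auto
        finally have "\<bar>interp_quantile n w x - x\<bar> \<le> (N * (1 - x)) * e" using sx by simp
        then have "(1 - x) powr (- lam) * \<bar>interp_quantile n w x - x\<bar> \<le> (1 - x) powr (- lam) * ((N * (1 - x)) * e)"
          by (intro mult_left_mono) auto
        also have "\<dots> = ((1 - x) powr (- lam) * (N * (1 - x))) * e" by simp
        also have "\<dots> \<le> N powr lam * e"
          using powr_helper[OF yp _ _ lam(2)] y N e by (intro mult_right_mono) auto
        finally show ?thesis using my by simp
      qed
    qed
    show ?thesis using B1 B2 by simp
  qed
  then show "\<bar>interp_quantile n w x - x\<bar> \<le> e"
    and "(min x (1 - x)) powr (- lam) * \<bar>interp_quantile n w x - x\<bar> \<le> real (n + 1) powr lam * e"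
    by (simp_all add: N_def)
qed

lemma core:
  fixes F :: "real \<Rightarrow> real" and Y :: "nat \<Rightarrow> real"
  assumes n: "1 \<le> n" and Fmono: "mono F" and Fr: "\<And>t. 0 < F t \<and> F t < 1"
    and lip: "\<And>a b. a \<le> b \<Longrightarrow> F b - F a \<le> B * (b - a)" and B: "0 \<le> B"
    and hpos: "0 < h" and lam: "0 < lam" "lam < 1" and E0: "0 \<le> E"
    and hE: "\<And>x. x \<in> {0<..<1} \<Longrightarrow> \<bar>real (card {j\<in>{1..n}. F (Y j) \<le> x}) - real n * x\<bar> \<le> E"
    and x: "x \<in> {0..1}"
  shows "\<bar>Ftilde_inv F Y h \<tau> n x - x\<bar> \<le> 2 * B * h + (E + 1) / real n"
    and "(min x (1 - x)) powr (- lam) * \<bar>Ftilde_inv F Y h \<tau> n x - x\<bar>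
           \<le> real (n + 1) powr lam * (2 * B * h + (E + 1) / real n)"
proof -
  define m where "m = Max (Y ` {1..n})"
  define V where "V = Yni F Y h \<tau> n"
  have hV: "\<bar>V i - F (Y i)\<bar> \<le> 2 * B * h \<and> 0 \<le> V i \<and> V i \<le> 1" if i: "i \<in> {1..n}" for i
  proof -
    have ym: "Y i \<le> m" unfolding m_def using i by (intro Max_ge) auto
    have xe: "Xni Y h \<tau> n i = Y i \<or> Xni Y h \<tau> n i = Y i + h" by (simp add: Xni_def)
    have Ve: "V i = Hn F m h (Xni Y h \<tau> n i)" by (simp add: V_def Yni_def m_def)
    have r0: "\<And>t. 0 \<le> F t" and r1: "\<And>t. F t \<le> 1" using Fr less_imp_le by blast+
    show ?thesis unfolding Ve using Hn_bound[OF Fmono r0 r1 lip hpos ym xe] by simp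
  qed
  define e where "e = 2 * B * h + (E + 1) / real n"
  have e0: "0 \<le> e" using B hpos E0 n by (simp add: e_def)
  have hw: "\<bar>order_stat V n k - real k / real (n + 1)\<bar> \<le> e" if "k \<in> {1..n}" for k
    unfolding e_def
    by (rule quant[where U="\<lambda>j. F (Y j)"]) (use n B hpos E0 Fr hV hE that in auto)
  have ft: "Ftilde_inv F Y h \<tau> n = interp_quantile n (order_stat V n)"
    by (simp add: Ftilde_inv_def V_def)
  show "\<bar>Ftilde_inv F Y h \<tau> n x - x\<bar> \<le> 2 * B * h + (E + 1) / real n"
    unfolding ft e_def[symmetric] by (rule interp_bound(1)[OF n e0 hw lam x])
  show "(min x (1 - x)) powr (- lam) * \<bar>Ftilde_inv F Y h \<tau> n x - x\<bar>
           \<le> real (n + 1) powr lam * (2 * B * h + (E + 1) / real n)"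
    unfolding ft e_def[symmetric] by (rule interp_bound(2)[OF n e0 hw lam x])
qed

lemma herm_borel: "hermite q \<in> borel_measurable borel"
proof -
  have "\<And>x. isCont (hermite q) x"
    subgoal for x by (induction q x rule: hermite.induct) (auto intro!: continuous_intros)
    done
  then have "continuous_on UNIV (hermite q)" by (simp add: continuous_at_imp_continuous_on)
  then show ?thesis by (simp add: borel_measurable_continuous_onI)
qed

lemma sum_ind: "finite A \<Longrightarrow> (\<Sum>j\<in>A. (if P j then 1 else 0) - x) = real (card {j\<in>A. P j}) - real (card A) * (x::real)"
  by (simp add: sum_subtractf sum.If_cases Int_def conj_commute)

lemma powr_np1: "1 \<le> n \<Longrightarrow> 0 < lam \<Longrightarrow> lam < 1 \<Longrightarrow> real (n + 1) powr lam \<le> 2 * real n powr lam"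
proof -
  assume n: "1 \<le> n" and l: "0 < lam" "lam < 1"
  have "real (n + 1) powr lam \<le> (2 * real n) powr lam" using n l by (intro powr_mono2) auto
  also have "\<dots> = 2 powr lam * real n powr lam" by (simp add: powr_mult)
  also have "\<dots> \<le> 2 * real n powr lam"
  proof -
    have "2 powr lam \<le> 2 powr (1::real)" using l by (intro powr_mono) auto
    then show ?thesis by (intro mult_right_mono) auto
  qed
  finally show ?thesis .
qed

theorem lemma1:
  fixes M :: "'a measure" and \<xi> :: "nat \<Rightarrow> 'a \<Rightarrow> real"
    and G F f :: "real \<Rightarrow> real" and L :: "real \<Rightarrow> real"
    and D \<tau> c lam \<theta> \<rho> C \<epsilon>1 \<delta> :: real
  assumes M: "prob_space M"
    and meas: "\<And>i. \<xi> i \<in> borel_measurable M"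
    and gauss: "gaussian_process M \<xi>"
    and stat: "stationary_process M \<xi>"
    and mean0: "(\<integral>\<omega>. \<xi> 1 \<omega> \<partial>M) = 0"
    and var1: "(\<integral>\<omega>. (\<xi> 1 \<omega>)\<^sup>2 \<partial>M) = 1"
    and D: "0 < D" "D < 1"
    and L: "slowly_varying L"
    and lrd: "(\<lambda>k::nat. \<integral>\<omega>. \<xi> 1 \<omega> * \<xi> (1 + k) \<omega> \<partial>M) \<sim>[at_top] (\<lambda>k. real k powr (- D) * L (real k))"
    and G: "G \<in> borel_measurable borel"
    and F_def: "\<And>x. F x = measure M {\<omega>\<in>space M. G (\<xi> 1 \<omega>) \<le> x}"
    and F_cont: "continuous_on UNIV F"
    and F_mono: "strict_mono F"
    and f_nonneg: "\<And>x. 0 \<le> f x"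
    and f_dens: "distributed M lborel (\<lambda>\<omega>. G (\<xi> 1 \<omega>)) (\<lambda>x. ennreal (f x))"
    and rank_ex: "\<exists>q\<ge>1. \<exists>y. Jcoef M G (\<xi> 1) q y \<noteq> 0"
    and Dr: "D * real (hermite_rank M G (\<xi> 1)) < 1"
    and tau: "0 < \<tau>" "\<tau> < 1"
    and c: "0 < c"
    and lam: "0 < lam" "lam < 1/3"
    and theta: "0 < \<theta>"
    and H1: "bigOP M
       (\<lambda>n \<omega>. SUP p\<in>{0..1} \<times> {0<..<1}. ereal
          (1 / dnr M \<xi> (hermite_rank M G (\<xi> 1)) n * (min (snd p) (1 - snd p)) powr (- lam) *
           \<bar>(\<Sum>j\<in>{1..nat \<lfloor>real n * fst p\<rfloor>}. (if F (G (\<xi> j \<omega>)) \<le> snd p then 1 else 0) - snd p)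
            - 1 / fact (hermite_rank M G (\<xi> 1)) * Jcoef M G (\<xi> 1) (hermite_rank M G (\<xi> 1)) (gen_inv F (snd p))
              * (\<Sum>j\<in>{1..nat \<lfloor>real n * fst p\<rfloor>}. hermite (hermite_rank M G (\<xi> 1)) (\<xi> j \<omega>))\<bar>))
       (\<lambda>n. real n powr (- \<theta>))"
    and rho: "0 < \<rho>" "\<rho> < min 1 (\<theta> / (1 - 2 * lam - \<theta>))"
    and H2: "\<exists>K. \<forall>\<^sub>F u in at_right 0. \<forall>x\<in>{0<..<1}.
       (min x (1 - x)) powr (- 2 * lam) * \<bar>(x - F (gen_inv F x - u)) / u - f (gen_inv F x)\<bar> \<le> K * u powr \<rho>"
    and H3: "bdd_above ((\<lambda>x. (min x (1 - x)) powr (- 2 * lam) * f (gen_inv F x)) ` {0<..<1})"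
    and H4: "(\<lambda>n. real n powr (lam + \<rho> - 1)) \<in> O(\<lambda>n. dnr M \<xi> (hermite_rank M G (\<xi> 1)) n powr (\<rho> - 1))"
    and H5: "2 * lam + \<theta> < 1/2"
    and H6: "0 < C" "0 < \<epsilon>1" "0 < \<delta>"
       "\<And>x u. x \<in> {0<..<1} \<Longrightarrow> \<bar>u\<bar> < \<delta> \<Longrightarrow>
          \<bar>1 - f (gen_inv F x + u) / f (gen_inv F x)\<bar> \<le> C * (min x (1 - x)) powr (- \<epsilon>1) * \<bar>u\<bar>"
    and H7: "(\<lambda>n. real n powr lam) \<in> o(\<lambda>n. dnr M \<xi> (hermite_rank M G (\<xi> 1)) n powr (1 - lam))"
    and H8: "(\<lambda>n. real n powr lam * dnr M \<xi> (hermite_rank M G (\<xi> 1)) n powr (1 + \<epsilon>1)) \<in> o(\<lambda>n. real n)"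
    and H9: "(\<lambda>n. dnr M \<xi> (hermite_rank M G (\<xi> 1)) n powr (\<rho> + lam)) \<in> o(\<lambda>n. real n powr \<rho>)"
  shows "bigOP M
           (\<lambda>n \<omega>. SUP x\<in>{0..1}. ereal \<bar>Ftilde_inv F (\<lambda>i. G (\<xi> i \<omega>))
              (c / real n * dnr M \<xi> (hermite_rank M G (\<xi> 1)) n) \<tau> n x - x\<bar>)
           (\<lambda>n. c / real n * dnr M \<xi> (hermite_rank M G (\<xi> 1)) n)
       \<and> bigOP M
           (\<lambda>n \<omega>. SUP x\<in>{0..1}. ereal ((min x (1 - x)) powr (- lam) *
              \<bar>Ftilde_inv F (\<lambda>i. G (\<xi> i \<omega>))
              (c / real n * dnr M \<xi> (hermite_rank M G (\<xi> 1)) n) \<tau> n x - x\<bar>))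
           (\<lambda>n. real n powr lam * (c / real n * dnr M \<xi> (hermite_rank M G (\<xi> 1)) n))"
  proof -
  interpret prob_space M by (rule M)
  define r where "r = hermite_rank M G (\<xi> 1)"
  have lam1: "lam < 1" using lam by simp
  define d where "d n = dnr M \<xi> r n" for n
  define S where "S n \<omega> = (\<Sum>j=1..n. hermite r (\<xi> j \<omega>))" for n \<omega>
  have X1m: "(\<lambda>\<omega>. G (\<xi> 1 \<omega>)) \<in> borel_measurable M"
    using measurable_compose[OF meas[of 1] G] by (simp add: o_def)
  have Fr: "\<And>t. 0 < F t \<and> F t < 1" using F_range[OF M F_def F_mono] by blast
  obtain B where B: "0 \<le> B" "\<And>t. f t \<le> B"
    using f_bounded[OF M F_def F_mono f_nonneg lam(1) H3] by blast
  have lip: "\<And>a b. a \<le> b \<Longrightarrow> F b - F a \<le> B * (b - a)"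
    using F_lip[OF M F_def X1m f_dens B(2) B(1)] by blast
  have Fmono: "mono F" using F_mono by (rule strict_mono_mono)
  have r1: "1 \<le> r" unfolding r_def hermite_rank_def using LeastI_ex[OF rank_ex] by blast
  have hint: "\<And>j q. 1 \<le> j \<Longrightarrow> integrable M (\<lambda>\<omega>. hermite q (\<xi> j \<omega>))"
    using herm_xi(1)[OF M meas gauss stat mean0 var1] by blast
  have hmean: "\<And>j q. 1 \<le> j \<Longrightarrow> 1 \<le> q \<Longrightarrow> (\<integral>\<omega>. hermite q (\<xi> j \<omega>) \<partial>M) = 0"
    using herm_xi(2)[OF M meas gauss stat mean0 var1] by blast
  define cJ where "cJ = (\<integral>\<omega>. \<bar>hermite r (\<xi> 1 \<omega>)\<bar> \<partial>M)"
  have cJ0: "0 \<le> cJ" unfolding cJ_def by (rule Bochner_Integration.integral_nonneg) auto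
  have hmeas: "\<And>j q. (\<lambda>\<omega>. hermite q (\<xi> j \<omega>)) \<in> borel_measurable M"
    using measurable_compose[OF meas herm_borel] by (simp add: o_def)
  have h1r: "integrable M (\<lambda>\<omega>. hermite r (\<xi> 1 \<omega>))" using hint by simp
  have Jb: "\<bar>Jcoef M G (\<xi> 1) r y\<bar> \<le> cJ" for y
  proof -
    have m1: "(\<lambda>\<omega>. (if G (\<xi> 1 \<omega>) \<le> y then 1 else 0) * hermite r (\<xi> 1 \<omega>)) \<in> borel_measurable M"
      using X1m hmeas[of r 1] by measurable
    have i1: "integrable M (\<lambda>\<omega>. (if G (\<xi> 1 \<omega>) \<le> y then 1 else 0) * hermite r (\<xi> 1 \<omega>))"
      by (rule Bochner_Integration.integrable_bound[OF integrable_abs[OF h1r] m1]) auto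
    have "\<bar>Jcoef M G (\<xi> 1) r y\<bar> \<le> (\<integral>\<omega>. \<bar>(if G (\<xi> 1 \<omega>) \<le> y then 1 else 0) * hermite r (\<xi> 1 \<omega>)\<bar> \<partial>M)"
      unfolding Jcoef_def using integral_norm_bound[of M "\<lambda>\<omega>. (if G (\<xi> 1 \<omega>) \<le> y then 1 else 0) * hermite r (\<xi> 1 \<omega>)"]
      by simp
    also have "\<dots> \<le> cJ" unfolding cJ_def
      by (rule Bochner_Integration.integral_mono[OF integrable_abs[OF i1] integrable_abs[OF h1r]]) auto
    finally show ?thesis .
  qed
  have Sint: "integrable M (S n)" for n
    unfolding S_def by (intro Bochner_Integration.integrable_sum hint) auto
  have Smeas: "S n \<in> borel_measurable M" for n using Sint[of n] by auto
  have SE: "expectation (S n) = 0" for n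
    unfolding S_def using hint hmean r1 by (subst Bochner_Integration.integral_sum) auto
  have cheb: "prob {\<omega>\<in>space M. a * d n \<le> \<bar>S n \<omega>\<bar>} \<le> 1 / a\<^sup>2" if dp: "0 < d n" and a: "0 < a" for n a
  proof -
    have v: "variance (S n) = (d n)\<^sup>2"
    proof -
      have "0 \<le> variance (S n)" by (rule Bochner_Integration.integral_nonneg) auto
      then show ?thesis unfolding d_def dnr_def S_def r_def by simp
    qed
    have vS: "variance (S n) = (\<integral>\<omega>. (S n \<omega>)\<^sup>2 \<partial>M)" using SE[of n] by simp
    have "integrable M (\<lambda>\<omega>. (S n \<omega>)\<^sup>2)"
    proof (rule ccontr)
      assume "\<not> integrable M (\<lambda>\<omega>. (S n \<omega>)\<^sup>2)"
      then have "(\<integral>\<omega>. (S n \<omega>)\<^sup>2 \<partial>M) = 0" by (rule not_integrable_integral_eq)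
      then show False using v vS dp by simp
    qed
    then have "prob {\<omega>\<in>space M. \<bar>S n \<omega> - expectation (S n)\<bar> \<ge> a * d n} \<le> variance (S n) / (a * d n)\<^sup>2"
      using Smeas[of n] a dp by (intro Chebyshev_inequality) auto
    also have "variance (S n) / (a * d n)\<^sup>2 = 1 / a\<^sup>2" using v dp a by (simp add: power_mult_distrib)
    finally show ?thesis using SE[of n] by simp
  qed
  obtain N2 where N2: "\<And>n. n \<ge> N2 \<Longrightarrow> 1 \<le> d n"
  proof -
    have "eventually (\<lambda>n. norm (real n powr lam) \<le> 1 * norm (dnr M \<xi> r n powr (1 - lam))) at_top"
      using landau_o.smallD[OF H7[folded r_def], of 1] by simp
    then obtain N where N: "\<And>n. n \<ge> N \<Longrightarrow> norm (real n powr lam) \<le> 1 * norm (d n powr (1 - lam))"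
      unfolding eventually_at_top_linorder d_def by blast
    have "1 \<le> d n" if n: "n \<ge> max N 1" for n
    proof (rule ccontr)
      assume "\<not> 1 \<le> d n"
      then have d1: "d n < 1" by simp
      have d0: "0 \<le> d n" unfolding d_def dnr_def by simp
      have "d n powr (1 - lam) < 1 powr (1 - lam)" using d0 d1 lam by (intro powr_less_mono2) auto
      then have "d n powr (1 - lam) < 1" by simp
      moreover have "1 \<le> real n powr lam" using n lam by (intro ge_one_powr_ge_zero) auto
      moreover have "0 \<le> d n powr (1 - lam)" by simp
      ultimately show False using N[of n] n by simp
    qed
    then show ?thesis using that by blast
  qed
  define T where "T n \<omega> = (SUP p\<in>{0..1} \<times> {0<..<1}. ereal
          (1 / dnr M \<xi> (hermite_rank M G (\<xi> 1)) n * (min (snd p) (1 - snd p)) powr (- lam) *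
           \<bar>(\<Sum>j\<in>{1..nat \<lfloor>real n * fst p\<rfloor>}. (if F (G (\<xi> j \<omega>)) \<le> snd p then 1 else 0) - snd p)
            - 1 / fact (hermite_rank M G (\<xi> 1)) * Jcoef M G (\<xi> 1) (hermite_rank M G (\<xi> 1)) (gen_inv F (snd p))
              * (\<Sum>j\<in>{1..nat \<lfloor>real n * fst p\<rfloor>}. hermite (hermite_rank M G (\<xi> 1)) (\<xi> j \<omega>))\<bar>))" for n \<omega>
  have good: "\<bar>Ftilde_inv F (\<lambda>i. G (\<xi> i \<omega>)) (c / real n * d n) \<tau> n x - x\<bar> \<le> Kc * (c / real n * d n) \<and>
      (min x (1 - x)) powr (- lam) * \<bar>Ftilde_inv F (\<lambda>i. G (\<xi> i \<omega>)) (c / real n * d n) \<tau> n x - x\<bar>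
        \<le> 2 * Kc * (real n powr lam * (c / real n * d n))"
    if n: "1 \<le> n" and dn: "1 \<le> d n" and Tb: "T n \<omega> \<le> ereal (K1 * real n powr (- \<theta>))"
      and Sb: "\<bar>S n \<omega>\<bar> < a * d n" and a: "0 < a" and x: "x \<in> {0..1}"
      and Kc: "Kc = (2 * B * c + \<bar>K1\<bar> + cJ * a / fact r + 1) / c"
    for n \<omega> x K1 a Kc
  proof -
    define E where "E = d n * (\<bar>K1\<bar> + cJ * a / fact r)"
    have E0: "0 \<le> E" unfolding E_def using dn cJ0 a by simp
    have hE: "\<bar>real (card {j\<in>{1..n}. F (G (\<xi> j \<omega>)) \<le> y}) - real n * y\<bar> \<le> E" if y: "y \<in> {0<..<1}" for y
    proof -
      define w where "w = (min y (1 - y)) powr (- lam)"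
      have w1: "1 \<le> w"
      proof -
        have m: "0 < min y (1 - y)" "min y (1 - y) \<le> 1" using y by auto
        have "w = (1 / min y (1 - y)) powr lam" unfolding w_def using m
          by (simp add: powr_divide powr_minus_divide)
        moreover have "1 \<le> 1 / min y (1 - y)" using m by simp
        ultimately show ?thesis using lam by (simp add: ge_one_powr_ge_zero)
      qed
      define A where "A = real (card {j\<in>{1..n}. F (G (\<xi> j \<omega>)) \<le> y}) - real n * y"
      define Z where "Z = 1 / fact r * Jcoef M G (\<xi> 1) r (gen_inv F y) * S n \<omega>"
      have nf: "nat \<lfloor>real n * 1\<rfloor> = n" by simp
      have sA: "(\<Sum>j\<in>{1..n}. (if F (G (\<xi> j \<omega>)) \<le> y then 1 else 0) - y) = A"
        unfolding A_def using sum_ind[of "{1..n}" "\<lambda>j. F (G (\<xi> j \<omega>)) \<le> y" y] by simp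
      have el: "ereal (1 / d n * w * \<bar>A - Z\<bar>) = ereal (1 / dnr M \<xi> (hermite_rank M G (\<xi> 1)) n
           * (min (snd (1::real, y)) (1 - snd (1::real,y))) powr (- lam) *
           \<bar>(\<Sum>j\<in>{1..nat \<lfloor>real n * fst (1::real, y)\<rfloor>}. (if F (G (\<xi> j \<omega>)) \<le> snd (1::real,y) then 1 else 0) - snd (1::real,y))
            - 1 / fact (hermite_rank M G (\<xi> 1)) * Jcoef M G (\<xi> 1) (hermite_rank M G (\<xi> 1)) (gen_inv F (snd (1::real,y)))
              * (\<Sum>j\<in>{1..nat \<lfloor>real n * fst (1::real,y)\<rfloor>}. hermite (hermite_rank M G (\<xi> 1)) (\<xi> j \<omega>))\<bar>)"
        unfolding fst_conv snd_conv nf sA d_def r_def w_def Z_def S_def by (rule refl)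
      have mem: "(1::real, y) \<in> {0..1} \<times> {0<..<1}" using y by simp
      have "ereal (1 / d n * w * \<bar>A - Z\<bar>) \<le> T n \<omega>"
        unfolding T_def el by (rule SUP_upper[OF mem])
      then have "ereal (1 / d n * w * \<bar>A - Z\<bar>) \<le> ereal (K1 * real n powr (- \<theta>))"
        using Tb by (rule order_trans)
      then have "1 / d n * w * \<bar>A - Z\<bar> \<le> K1 * real n powr (- \<theta>)" by (simp only: ereal_less_eq)
      then have "w * \<bar>A - Z\<bar> \<le> d n * (K1 * real n powr (- \<theta>))" using dn by (simp add: field_simps)
      also have "\<dots> \<le> d n * \<bar>K1\<bar>"
      proof -
        have "real n powr (- \<theta>) \<le> 1" using n theta by (simp add: powr_minus_divide ge_one_powr_ge_zero)
        moreover have "0 \<le> real n powr (- \<theta>)" by simp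
        ultimately have "K1 * real n powr (- \<theta>) \<le> \<bar>K1\<bar> * real n powr (- \<theta>)"
          "\<bar>K1\<bar> * real n powr (- \<theta>) \<le> \<bar>K1\<bar> * 1"
          by (intro mult_right_mono mult_left_mono; simp)+
        then have "K1 * real n powr (- \<theta>) \<le> \<bar>K1\<bar>" by linarith
        then show ?thesis using dn by (intro mult_left_mono) auto
      qed
      finally have a0: "w * \<bar>A - Z\<bar> \<le> d n * \<bar>K1\<bar>" .
      have "1 * \<bar>A - Z\<bar> \<le> w * \<bar>A - Z\<bar>" using w1 by (intro mult_right_mono) auto
      then have a1: "\<bar>A - Z\<bar> \<le> d n * \<bar>K1\<bar>" using a0 by simp
      have "\<bar>Z\<bar> \<le> 1 / fact r * cJ * (a * d n)"
      proof -
        have "\<bar>Z\<bar> = 1 / fact r * \<bar>Jcoef M G (\<xi> 1) r (gen_inv F y)\<bar> * \<bar>S n \<omega>\<bar>" by (simp add: Z_def abs_mult)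
        also have "\<dots> \<le> 1 / fact r * cJ * (a * d n)"
          using Jb[of "gen_inv F y"] Sb by (intro mult_mono) auto
        finally show ?thesis .
      qed
      moreover have "1 / fact r * cJ * (a * d n) = d n * (cJ * a / fact r)" by simp
      moreover have "E = d n * \<bar>K1\<bar> + d n * (cJ * a / fact r)" unfolding E_def by (simp add: distrib_left)
      moreover have "\<bar>A\<bar> \<le> \<bar>A - Z\<bar> + \<bar>Z\<bar>" by linarith
      ultimately have "\<bar>A\<bar> \<le> E" using a1 by linarith
      then show ?thesis by (simp add: A_def)
    qed
    have hpos: "0 < c / real n * d n" using c n dn by simp
    have co: "\<bar>Ftilde_inv F (\<lambda>i. G (\<xi> i \<omega>)) (c / real n * d n) \<tau> n x - x\<bar>
        \<le> 2 * B * (c / real n * d n) + (E + 1) / real n"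
      and co2: "(min x (1 - x)) powr (- lam) * \<bar>Ftilde_inv F (\<lambda>i. G (\<xi> i \<omega>)) (c / real n * d n) \<tau> n x - x\<bar>
        \<le> real (n + 1) powr lam * (2 * B * (c / real n * d n) + (E + 1) / real n)"
      using core[OF n Fmono Fr lip B(1) hpos lam(1) _ E0 hE x] lam by auto
    have eK: "2 * B * (c / real n * d n) + (E + 1) / real n \<le> Kc * (c / real n * d n)"
    proof -
      have "E + 1 \<le> d n * (\<bar>K1\<bar> + cJ * a / fact r + 1)" using dn by (simp add: E_def algebra_simps)
      then have "(E + 1) / real n \<le> d n * (\<bar>K1\<bar> + cJ * a / fact r + 1) / real n" using n
        by (intro divide_right_mono) auto
      moreover have "Kc * (c / real n * d n) = 2 * B * (c / real n * d n) + d n * (\<bar>K1\<bar> + cJ * a / fact r + 1) / real n"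
      proof -
        define K' where "K' = \<bar>K1\<bar> + cJ * a / fact r + 1"
        have kc: "Kc * c = 2 * B * c + K'" unfolding Kc K'_def using c by simp
        have "Kc * (c / real n * d n) = (Kc * c) * d n / real n" by simp
        also have "\<dots> = (2 * B * c + K') * d n / real n" by (simp only: kc)
        also have "\<dots> = 2 * B * (c / real n * d n) + d n * K' / real n" by (simp add: algebra_simps add_divide_distrib)
        finally show ?thesis unfolding K'_def .
      qed
      ultimately show ?thesis by linarith
    qed
    have "0 \<le> c / real n * d n" using hpos by (rule less_imp_le)
    then have "0 \<le> 2 * B * (c / real n * d n)" by (rule mult_nonneg_nonneg[rotated]) (use B(1) in simp)
    moreover have "0 \<le> (E + 1) / real n" using E0 by simp
    ultimately have nn: "0 \<le> 2 * B * (c / real n * d n) + (E + 1) / real n" by linarith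
    then have Kc0: "0 \<le> Kc * (c / real n * d n)" using eK by linarith
    have "real (n + 1) powr lam * (2 * B * (c / real n * d n) + (E + 1) / real n)
        \<le> (2 * real n powr lam) * (Kc * (c / real n * d n))"
      using eK powr_np1[OF n lam(1) lam1] Kc0 nn by (intro mult_mono) auto
    moreover have "(2 * real n powr lam) * (Kc * (c / real n * d n)) = 2 * Kc * (real n powr lam * (c / real n * d n))"
      by (simp only: mult_ac)
    ultimately have q2: "(min x (1 - x)) powr (- lam) * \<bar>Ftilde_inv F (\<lambda>i. G (\<xi> i \<omega>)) (c / real n * d n) \<tau> n x - x\<bar>
        \<le> 2 * Kc * (real n powr lam * (c / real n * d n))" using co2 by linarith
    have q1: "\<bar>Ftilde_inv F (\<lambda>i. G (\<xi> i \<omega>)) (c / real n * d n) \<tau> n x - x\<bar> \<le> Kc * (c / real n * d n)"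
      using co eK by linarith
    show ?thesis using q1 q2 by (rule conjI)
  qed
  have main: "\<exists>K N. \<forall>n\<ge>N. \<exists>A\<in>sets M. measure M A \<le> \<epsilon> \<and>
      (\<forall>\<omega>\<in>space M - A. \<forall>x\<in>{0..1}.
        \<bar>Ftilde_inv F (\<lambda>i. G (\<xi> i \<omega>)) (c / real n * d n) \<tau> n x - x\<bar> \<le> K * (c / real n * d n) \<and>
        (min x (1 - x)) powr (- lam) * \<bar>Ftilde_inv F (\<lambda>i. G (\<xi> i \<omega>)) (c / real n * d n) \<tau> n x - x\<bar>
          \<le> 2 * K * (real n powr lam * (c / real n * d n)))" if eps: "0 < \<epsilon>" for \<epsilon>
  proof -
    have H1e: "\<exists>K N. \<forall>n\<ge>N. \<exists>A\<in>sets M.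
        {\<omega>\<in>space M. T n \<omega> > ereal (K * real n powr (- \<theta>))} \<subseteq> A \<and> measure M A \<le> \<epsilon> / 2"
      unfolding T_def by (rule H1[unfolded bigOP_def, rule_format, OF half_gt_zero[OF eps]])
    then obtain K1 N1 where KN1: "\<And>n. n \<ge> N1 \<Longrightarrow> \<exists>A\<in>sets M.
        {\<omega>\<in>space M. T n \<omega> > ereal (K1 * real n powr (- \<theta>))} \<subseteq> A \<and> measure M A \<le> \<epsilon> / 2"
      by blast
    define a where "a = sqrt (2 / \<epsilon>)"
    have a: "0 < a" using eps by (simp add: a_def)
    have a2: "1 / a\<^sup>2 = \<epsilon> / 2" using eps by (simp add: a_def)
    define Kc where "Kc = (2 * B * c + \<bar>K1\<bar> + cJ * a / fact r + 1) / c"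
    have "\<forall>n\<ge>max (max N1 N2) 1. \<exists>A\<in>sets M. measure M A \<le> \<epsilon> \<and>
      (\<forall>\<omega>\<in>space M - A. \<forall>x\<in>{0..1}.
        \<bar>Ftilde_inv F (\<lambda>i. G (\<xi> i \<omega>)) (c / real n * d n) \<tau> n x - x\<bar> \<le> Kc * (c / real n * d n) \<and>
        (min x (1 - x)) powr (- lam) * \<bar>Ftilde_inv F (\<lambda>i. G (\<xi> i \<omega>)) (c / real n * d n) \<tau> n x - x\<bar>
          \<le> 2 * Kc * (real n powr lam * (c / real n * d n)))"
    proof (intro allI impI)
      fix n assume nN: "max (max N1 N2) 1 \<le> n"
      obtain A1 where A1: "A1 \<in> sets M" "{\<omega>\<in>space M. T n \<omega> > ereal (K1 * real n powr (- \<theta>))} \<subseteq> A1"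
        "measure M A1 \<le> \<epsilon> / 2" using KN1[of n] nN by auto
      define A2 where "A2 = {\<omega>\<in>space M. a * d n \<le> \<bar>S n \<omega>\<bar>}"
      have A2m: "A2 \<in> sets M" unfolding A2_def using Smeas[of n] by measurable
      have dn: "1 \<le> d n" using N2 nN by simp
      have mA2: "measure M A2 \<le> \<epsilon> / 2" unfolding A2_def using cheb[of n a] dn a a2 by simp
      have mA: "measure M (A1 \<union> A2) \<le> \<epsilon>"
        using measure_Un_le[OF A1(1) A2m] A1(3) mA2 by simp
      have Am: "A1 \<union> A2 \<in> sets M" using A1(1) A2m by auto
      show "\<exists>A\<in>sets M. measure M A \<le> \<epsilon> \<and>
      (\<forall>\<omega>\<in>space M - A. \<forall>x\<in>{0..1}.
        \<bar>Ftilde_inv F (\<lambda>i. G (\<xi> i \<omega>)) (c / real n * d n) \<tau> n x - x\<bar> \<le> Kc * (c / real n * d n) \<and>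
        (min x (1 - x)) powr (- lam) * \<bar>Ftilde_inv F (\<lambda>i. G (\<xi> i \<omega>)) (c / real n * d n) \<tau> n x - x\<bar>
          \<le> 2 * Kc * (real n powr lam * (c / real n * d n)))"
      proof (rule bexI[OF _ Am], rule conjI[OF mA], intro ballI)
        fix \<omega> and x :: real assume \<omega>: "\<omega> \<in> space M - (A1 \<union> A2)" and x: "x \<in> {0..1}"
        have Tb: "T n \<omega> \<le> ereal (K1 * real n powr (- \<theta>))" using \<omega> A1(2) by (auto simp: not_less)
        have Sb: "\<bar>S n \<omega>\<bar> < a * d n" using \<omega> by (auto simp: A2_def)
        show "\<bar>Ftilde_inv F (\<lambda>i. G (\<xi> i \<omega>)) (c / real n * d n) \<tau> n x - x\<bar> \<le> Kc * (c / real n * d n) \<and>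
        (min x (1 - x)) powr (- lam) * \<bar>Ftilde_inv F (\<lambda>i. G (\<xi> i \<omega>)) (c / real n * d n) \<tau> n x - x\<bar>
          \<le> 2 * Kc * (real n powr lam * (c / real n * d n))"
          by (rule good[OF _ dn Tb Sb a x Kc_def]) (use nN in simp)
      qed
    qed
    then show ?thesis by (intro exI)
  qed
  have P1: "bigOP M
           (\<lambda>n \<omega>. SUP x\<in>{0..1}. ereal \<bar>Ftilde_inv F (\<lambda>i. G (\<xi> i \<omega>))
              (c / real n * d n) \<tau> n x - x\<bar>)
           (\<lambda>n. c / real n * d n)"
    unfolding bigOP_def
  proof (intro allI impI)
    fix \<epsilon> :: real assume "0 < \<epsilon>"
    obtain K N where KN: "\<forall>n\<ge>N. \<exists>A\<in>sets M. measure M A \<le> \<epsilon> \<and>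
      (\<forall>\<omega>\<in>space M - A. \<forall>x\<in>{0..1}.
        \<bar>Ftilde_inv F (\<lambda>i. G (\<xi> i \<omega>)) (c / real n * d n) \<tau> n x - x\<bar> \<le> K * (c / real n * d n) \<and>
        (min x (1 - x)) powr (- lam) * \<bar>Ftilde_inv F (\<lambda>i. G (\<xi> i \<omega>)) (c / real n * d n) \<tau> n x - x\<bar>
          \<le> 2 * K * (real n powr lam * (c / real n * d n)))" using main[OF \<open>0 < \<epsilon>\<close>] by (elim exE) (erule that)
    show "\<exists>K N. \<forall>n\<ge>N. \<exists>A\<in>sets M. {\<omega> \<in> space M. ereal (K * (c / real n * d n)) <
      (SUP x\<in>{0..1}. ereal \<bar>Ftilde_inv F (\<lambda>i. G (\<xi> i \<omega>)) (c / real n * d n) \<tau> n x - x\<bar>)} \<subseteq> A \<and> measure M A \<le> \<epsilon>"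
    proof (intro exI allI impI)
      fix n assume "N \<le> n"
      obtain A where A0: "A \<in> sets M" and AA: "measure M A \<le> \<epsilon> \<and>
      (\<forall>\<omega>\<in>space M - A. \<forall>x\<in>{0..1}.
        \<bar>Ftilde_inv F (\<lambda>i. G (\<xi> i \<omega>)) (c / real n * d n) \<tau> n x - x\<bar> \<le> K * (c / real n * d n) \<and>
        (min x (1 - x)) powr (- lam) * \<bar>Ftilde_inv F (\<lambda>i. G (\<xi> i \<omega>)) (c / real n * d n) \<tau> n x - x\<bar>
          \<le> 2 * K * (real n powr lam * (c / real n * d n)))"
        using KN[rule_format, OF \<open>N \<le> n\<close>] by (elim bexE) (rule that; assumption)
      have A: "A \<in> sets M" "measure M A \<le> \<epsilon>" using A0 AA by auto
      have B: "\<bar>Ftilde_inv F (\<lambda>i. G (\<xi> i \<omega>)) (c / real n * d n) \<tau> n x - x\<bar> \<le> K * (c / real n * d n)"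
        if "\<omega> \<in> space M - A" "x \<in> {0..1}" for \<omega> x
        using bspec[OF bspec[OF conjunct2[OF AA] that(1)] that(2)] by (rule conjunct1)
      show "\<exists>A\<in>sets M. {\<omega> \<in> space M. ereal (K * (c / real n * d n)) <
      (SUP x\<in>{0..1}. ereal \<bar>Ftilde_inv F (\<lambda>i. G (\<xi> i \<omega>)) (c / real n * d n) \<tau> n x - x\<bar>)} \<subseteq> A \<and> measure M A \<le> \<epsilon>"
      proof (intro bexI[OF _ A(1)] conjI A(2) subsetI)
        fix \<omega> assume w: "\<omega> \<in> {\<omega> \<in> space M. ereal (K * (c / real n * d n)) <
          (SUP x\<in>{0..1}. ereal \<bar>Ftilde_inv F (\<lambda>i. G (\<xi> i \<omega>)) (c / real n * d n) \<tau> n x - x\<bar>)}"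
        show "\<omega> \<in> A"
        proof (rule ccontr)
          assume "\<omega> \<notin> A"
          then have "(SUP x\<in>{0..1}. ereal \<bar>Ftilde_inv F (\<lambda>i. G (\<xi> i \<omega>)) (c / real n * d n) \<tau> n x - x\<bar>)
              \<le> ereal (K * (c / real n * d n))"
            using w B by (intro SUP_least) auto
          then show False using w leD by blast
        qed
      qed
    qed
  qed
  have P2: "bigOP M
           (\<lambda>n \<omega>. SUP x\<in>{0..1}. ereal ((min x (1 - x)) powr (- lam) *
              \<bar>Ftilde_inv F (\<lambda>i. G (\<xi> i \<omega>))
              (c / real n * d n) \<tau> n x - x\<bar>))
           (\<lambda>n. real n powr lam * (c / real n * d n))"
    unfolding bigOP_def
  proof (intro allI impI)
    fix \<epsilon> :: real assume "0 < \<epsilon>"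
    obtain K N where KN: "\<forall>n\<ge>N. \<exists>A\<in>sets M. measure M A \<le> \<epsilon> \<and>
      (\<forall>\<omega>\<in>space M - A. \<forall>x\<in>{0..1}.
        \<bar>Ftilde_inv F (\<lambda>i. G (\<xi> i \<omega>)) (c / real n * d n) \<tau> n x - x\<bar> \<le> K * (c / real n * d n) \<and>
        (min x (1 - x)) powr (- lam) * \<bar>Ftilde_inv F (\<lambda>i. G (\<xi> i \<omega>)) (c / real n * d n) \<tau> n x - x\<bar>
          \<le> 2 * K * (real n powr lam * (c / real n * d n)))" using main[OF \<open>0 < \<epsilon>\<close>] by (elim exE) (erule that)
    show "\<exists>K N. \<forall>n\<ge>N. \<exists>A\<in>sets M. {\<omega> \<in> space M. ereal (K * (real n powr lam * (c / real n * d n))) <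
      (SUP x\<in>{0..1}. ereal ((min x (1 - x)) powr (- lam) * \<bar>Ftilde_inv F (\<lambda>i. G (\<xi> i \<omega>)) (c / real n * d n) \<tau> n x - x\<bar>))} \<subseteq> A \<and> measure M A \<le> \<epsilon>"
    proof (intro exI[of _ "2 * K"] exI[of _ N] allI impI)
      fix n assume "N \<le> n"
      obtain A where A0: "A \<in> sets M" and AA: "measure M A \<le> \<epsilon> \<and>
      (\<forall>\<omega>\<in>space M - A. \<forall>x\<in>{0..1}.
        \<bar>Ftilde_inv F (\<lambda>i. G (\<xi> i \<omega>)) (c / real n * d n) \<tau> n x - x\<bar> \<le> K * (c / real n * d n) \<and>
        (min x (1 - x)) powr (- lam) * \<bar>Ftilde_inv F (\<lambda>i. G (\<xi> i \<omega>)) (c / real n * d n) \<tau> n x - x\<bar>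
          \<le> 2 * K * (real n powr lam * (c / real n * d n)))"
        using KN[rule_format, OF \<open>N \<le> n\<close>] by (elim bexE) (rule that; assumption)
      have A: "A \<in> sets M" "measure M A \<le> \<epsilon>" using A0 AA by auto
      have B: "(min x (1 - x)) powr (- lam) * \<bar>Ftilde_inv F (\<lambda>i. G (\<xi> i \<omega>)) (c / real n * d n) \<tau> n x - x\<bar>
          \<le> 2 * K * (real n powr lam * (c / real n * d n))"
        if "\<omega> \<in> space M - A" "x \<in> {0..1}" for \<omega> x
        using bspec[OF bspec[OF conjunct2[OF AA] that(1)] that(2)] by (rule conjunct2)
      show "\<exists>A\<in>sets M. {\<omega> \<in> space M. ereal (2 * K * (real n powr lam * (c / real n * d n))) <
      (SUP x\<in>{0..1}. ereal ((min x (1 - x)) powr (- lam) * \<bar>Ftilde_inv F (\<lambda>i. G (\<xi> i \<omega>)) (c / real n * d n) \<tau> n x - x\<bar>))} \<subseteq> A \<and> measure M A \<le> \<epsilon>"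
      proof (intro bexI[OF _ A(1)] conjI A(2) subsetI)
        fix \<omega> assume w: "\<omega> \<in> {\<omega> \<in> space M. ereal (2 * K * (real n powr lam * (c / real n * d n))) <
          (SUP x\<in>{0..1}. ereal ((min x (1 - x)) powr (- lam) * \<bar>Ftilde_inv F (\<lambda>i. G (\<xi> i \<omega>)) (c / real n * d n) \<tau> n x - x\<bar>))}"
        show "\<omega> \<in> A"
        proof (rule ccontr)
          assume "\<omega> \<notin> A"
          then have "(SUP x\<in>{0..1}. ereal ((min x (1 - x)) powr (- lam) * \<bar>Ftilde_inv F (\<lambda>i. G (\<xi> i \<omega>)) (c / real n * d n) \<tau> n x - x\<bar>))
              \<le> ereal (2 * K * (real n powr lam * (c / real n * d n)))"
            using w B by (intro SUP_least) auto
          then show False using w leD by blast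
        qed
      qed
    qed
  qed
  show ?thesis using P1 P2 unfolding d_def r_def by simp
qed

end
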